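(* Let $I=\mathcal{M}^0[K,G,K;P]$ be a finite Rees $0$-matrix semigroup with $|K|\ge3$, where $P$ is the $K\times K$ matrix with $p_{\kappa,\kappa}=e$ and $p_{\lambda,\kappa}=0$ for $\lambda\ne\kappa$. Then $\sigma_i(I)=3$.
   Context: $G$ is a finite group with identity $e$. $\mathcal{M}^0[K,G,K;P]$ is $(K\times G\times K)\cup\{0\}$ with $(\kappa,g,\lambda)(\mu,h,\nu)=(\kappa,gp_{\lambda,\mu}h,\nu)$ if $p_{\lambda,\mu}\ne0$, $=0$ otherwise, and $0$ a zero element; it is an inverse semigroup. An inverse subsemigroup is a subsemigroup closed under taking the unique inverse. $\sigma_i(I)$ is the least positive integer $n$ such that $I$ is the union of $n$ proper inverse subsemigroups, or $\infty$ if none exists. *)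

theory Defs
  imports "HOL-Algebra.Group" "HOL-Library.Extended_Nat"
begin

definition sg_inverses :: "'a set \<Rightarrow> ('a \<Rightarrow> 'a \<Rightarrow> 'a) \<Rightarrow> 'a \<Rightarrow> 'a set" where
  "sg_inverses S m x = {y \<in> S. m (m x y) x = x \<and> m (m y x) y = y}"

definition inverse_subsemigroup :: "'a set \<Rightarrow> ('a \<Rightarrow> 'a \<Rightarrow> 'a) \<Rightarrow> 'a set \<Rightarrow> bool" where
  "inverse_subsemigroup S m T \<longleftrightarrow>
     T \<subseteq> S \<and> (\<forall>a\<in>T. \<forall>b\<in>T. m a b \<in> T) \<and> (\<forall>x\<in>T. sg_inverses S m x \<subseteq> T)"

definition covers_by_proper_inv :: "'a set \<Rightarrow> ('a \<Rightarrow> 'a \<Rightarrow> 'a) \<Rightarrow> nat \<Rightarrow> bool" where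
  "covers_by_proper_inv S m n \<longleftrightarrow>
     (\<exists>T :: nat \<Rightarrow> 'a set. (\<forall>i<n. inverse_subsemigroup S m (T i) \<and> T i \<noteq> S)
                          \<and> (\<Union>i<n. T i) = S)"

definition sigma_i :: "'a set \<Rightarrow> ('a \<Rightarrow> 'a \<Rightarrow> 'a) \<Rightarrow> enat" where
  "sigma_i S m = (if \<exists>n>0. covers_by_proper_inv S m n
                  then enat (LEAST n. n > 0 \<and> covers_by_proper_inv S m n) else \<infinity>)"

text \<open>Rees 0-matrix semigroup M^0[K,G,K;P]; the zero is None, (k,g,l) is Some (k,g,l);
  a matrix entry None stands for 0.\<close>
definition rees0_carrier :: "'k set \<Rightarrow> ('g, 'b) monoid_scheme \<Rightarrow> ('k \<times> 'g \<times> 'k) option set" where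
  "rees0_carrier K G = insert None (Some ` (K \<times> carrier G \<times> K))"

fun rees0_mult :: "('g, 'b) monoid_scheme \<Rightarrow> ('k \<Rightarrow> 'k \<Rightarrow> 'g option)
     \<Rightarrow> ('k \<times> 'g \<times> 'k) option \<Rightarrow> ('k \<times> 'g \<times> 'k) option \<Rightarrow> ('k \<times> 'g \<times> 'k) option" where
  "rees0_mult G P (Some (k1, g, l1)) (Some (k2, h, l2)) =
     (case P l1 k2 of None \<Rightarrow> None | Some p \<Rightarrow> Some (k1, g \<otimes>\<^bsub>G\<^esub> p \<otimes>\<^bsub>G\<^esub> h, l2))"
| "rees0_mult G P _ _ = None"

definition diag_matrix :: "('g, 'b) monoid_scheme \<Rightarrow> 'k \<Rightarrow> 'k \<Rightarrow> 'g option" where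
  "diag_matrix G l1 k1 = (if l1 = k1 then Some \<one>\<^bsub>G\<^esub> else None)"

end

theory Submission
  imports Defs
begin

lemma rm_simp[simp]:
  "rees0_mult G (diag_matrix G) (Some (k, g, l)) (Some (l', h, n)) =
    (if l = l' then Some (k, g \<otimes>\<^bsub>G\<^esub> \<one>\<^bsub>G\<^esub> \<otimes>\<^bsub>G\<^esub> h, n) else None)"
  by (simp add: diag_matrix_def)

declare rees0_mult.simps(1)[simp del]

lemma rm_none1[simp]: "rees0_mult G P None x = None"
  by simp
lemma rm_none2[simp]: "rees0_mult G P x None = None"
  by (cases x) auto

lemma carrier_Some[simp]: "Some (k,g,l) \<in> rees0_carrier K G \<longleftrightarrow> k \<in> K \<and> g \<in> carrier G \<and> l \<in> K"
  by (auto simp: rees0_carrier_def)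

lemma carrier_None[simp]: "None \<in> rees0_carrier K G"
  by (auto simp: rees0_carrier_def)

lemma inv_mem:
  assumes "group G" "inverse_subsemigroup (rees0_carrier K G) (rees0_mult G (diag_matrix G)) T"
    "Some (k,g,l) \<in> T" "k \<in> K" "l \<in> K" "g \<in> carrier G"
  shows "Some (l, inv\<^bsub>G\<^esub> g, k) \<in> T"
proof -
  interpret G: group G by fact
  have "Some (l, inv\<^bsub>G\<^esub> g, k) \<in> sg_inverses (rees0_carrier K G) (rees0_mult G (diag_matrix G)) (Some (k,g,l))"
    using assms by (simp add: sg_inverses_def)
  then show ?thesis using assms(2,3) unfolding inverse_subsemigroup_def by blast
qed

lemma mul_mem:
  assumes "inverse_subsemigroup S m T" "a \<in> T" "b \<in> T"
  shows "m a b \<in> T"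
  using assms unfolding inverse_subsemigroup_def by blast

definition hrel :: "('g,'b) monoid_scheme \<Rightarrow> ('k\<times>'g\<times>'k) option set \<Rightarrow> 'k \<Rightarrow> 'k \<Rightarrow> bool" where
  "hrel G T k l \<longleftrightarrow> (\<forall>g\<in>carrier G. Some (k,g,l) \<in> T)"

lemma hrel_sym:
  assumes "group G" "inverse_subsemigroup (rees0_carrier K G) (rees0_mult G (diag_matrix G)) T"
    "k \<in> K" "l \<in> K" "hrel G T k l"
  shows "hrel G T l k"
  unfolding hrel_def
proof
  interpret G: group G by fact
  fix g assume g: "g \<in> carrier G"
  have "Some (k, inv\<^bsub>G\<^esub> g, l) \<in> T" using assms g by (simp add: hrel_def)
  from inv_mem[OF assms(1,2) this] assms g show "Some (l,g,k) \<in> T" by simp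
qed

lemma hrel_trans:
  assumes "group G" "inverse_subsemigroup (rees0_carrier K G) (rees0_mult G (diag_matrix G)) T"
    "hrel G T k l" "hrel G T l n"
  shows "hrel G T k n"
  unfolding hrel_def
proof
  interpret G: group G by fact
  fix g assume g: "g \<in> carrier G"
  have "Some (k, g, l) \<in> T" "Some (l, \<one>\<^bsub>G\<^esub>, n) \<in> T" using assms g by (auto simp: hrel_def)
  from mul_mem[OF assms(2) this] g show "Some (k,g,n) \<in> T" by simp
qed

lemma diag_cover:
  assumes "group G" "inverse_subsemigroup (rees0_carrier K G) (rees0_mult G (diag_matrix G)) T1"
    "inverse_subsemigroup (rees0_carrier K G) (rees0_mult G (diag_matrix G)) T2"
    "T1 \<union> T2 = rees0_carrier K G" "k \<in> K"
  shows "hrel G T1 k k \<or> hrel G T2 k k"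
proof (rule ccontr)
  interpret G: group G by fact
  assume "\<not> ?thesis"
  then obtain g h where g: "g \<in> carrier G" "Some (k,g,k) \<notin> T1"
    and h: "h \<in> carrier G" "Some (k,h,k) \<notin> T2" by (auto simp: hrel_def)
  have "Some (k,g,k) \<in> T1 \<union> T2" "Some (k,h,k) \<in> T1 \<union> T2"
    unfolding assms(4) using g h assms by auto
  then have g2: "Some (k,g,k) \<in> T2" and h1: "Some (k,h,k) \<in> T1"
    using g h by blast+
  have "Some (k, g \<otimes>\<^bsub>G\<^esub> h, k) \<in> T1 \<union> T2" using assms g h by simp
  then show False
  proof
    assume a: "Some (k, g \<otimes>\<^bsub>G\<^esub> h, k) \<in> T1"
    have "Some (k, inv\<^bsub>G\<^esub> h, k) \<in> T1" using inv_mem[OF assms(1,2) h1] assms h by simp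
    from mul_mem[OF assms(2) a this] g h have "Some (k, g, k) \<in> T1"
      by (simp add: G.m_assoc)
    with g show False by simp
  next
    assume a: "Some (k, g \<otimes>\<^bsub>G\<^esub> h, k) \<in> T2"
    have "Some (k, inv\<^bsub>G\<^esub> g, k) \<in> T2" using inv_mem[OF assms(1,3) g2] assms g by simp
    from mul_mem[OF assms(3) this a] g h have "Some (k, h, k) \<in> T2"
      by (simp add: G.m_assoc[symmetric])
    with h show False by simp
  qed
qed

lemma pair_cover:
  assumes "group G" "inverse_subsemigroup (rees0_carrier K G) (rees0_mult G (diag_matrix G)) T1"
    "inverse_subsemigroup (rees0_carrier K G) (rees0_mult G (diag_matrix G)) T2"
    "T1 \<union> T2 = rees0_carrier K G" "k \<in> K" "l \<in> K"
  shows "hrel G T1 k l \<or> hrel G T2 k l"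
proof (rule ccontr)
  interpret G: group G by fact
  assume "\<not> ?thesis"
  then obtain g h where g: "g \<in> carrier G" "Some (k,g,l) \<notin> T1"
    and h: "h \<in> carrier G" "Some (k,h,l) \<notin> T2" by (auto simp: hrel_def)
  have "Some (k,g,l) \<in> T1 \<union> T2" "Some (k,h,l) \<in> T1 \<union> T2"
    unfolding assms(4) using g h assms by auto
  then have g2: "Some (k,g,l) \<in> T2" and h1: "Some (k,h,l) \<in> T1"
    using g h by blast+
  from diag_cover[OF assms(1-5)] show False
  proof
    assume "hrel G T1 k k"
    then have "Some (k, g \<otimes>\<^bsub>G\<^esub> inv\<^bsub>G\<^esub> h, k) \<in> T1" using g h by (simp add: hrel_def)
    from mul_mem[OF assms(2) this h1] g h have "Some (k, g, l) \<in> T1"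
      by (simp add: G.m_assoc)
    with g show False by simp
  next
    assume "hrel G T2 k k"
    then have "Some (k, h \<otimes>\<^bsub>G\<^esub> inv\<^bsub>G\<^esub> g, k) \<in> T2" using g h by (simp add: hrel_def)
    from mul_mem[OF assms(3) this g2] g h have "Some (k, h, l) \<in> T2"
      by (simp add: G.m_assoc)
    with h show False by simp
  qed
qed

lemma full:
  assumes "group G" "inverse_subsemigroup (rees0_carrier K G) (rees0_mult G (diag_matrix G)) T"
    "\<forall>k\<in>K. \<forall>l\<in>K. hrel G T k l" "a \<in> K" "b \<in> K" "a \<noteq> b"
  shows "T = rees0_carrier K G"
proof -
  interpret G: group G by fact
  have "Some (a, \<one>\<^bsub>G\<^esub>, a) \<in> T" "Some (b, \<one>\<^bsub>G\<^esub>, b) \<in> T" using assms by (auto simp: hrel_def)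
  from mul_mem[OF assms(2) this] assms have "None \<in> T" by simp
  moreover have "T \<subseteq> rees0_carrier K G" using assms(2) by (simp add: inverse_subsemigroup_def)
  ultimately show ?thesis using assms(3) by (auto simp: rees0_carrier_def hrel_def)
qed

lemma no_two:
  assumes "group G" "inverse_subsemigroup (rees0_carrier K G) (rees0_mult G (diag_matrix G)) T1"
    "inverse_subsemigroup (rees0_carrier K G) (rees0_mult G (diag_matrix G)) T2"
    "T1 \<union> T2 = rees0_carrier K G" "a \<in> K" "b \<in> K" "a \<noteq> b"
    "T1 \<noteq> rees0_carrier K G"
  shows "T2 = rees0_carrier K G"
proof -
  obtain x y where xy: "x \<in> K" "y \<in> K" "\<not> hrel G T1 x y"
    using full[OF assms(1,2) _ assms(5-7)] assms(8) by blast
  have x2: "hrel G T2 x y" using pair_cover[OF assms(1-4) xy(1,2)] xy by blast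
  have zx: "hrel G T2 z x" if z: "z \<in> K" for z
  proof (cases "hrel G T1 z x")
    case False then show ?thesis using pair_cover[OF assms(1-4) z xy(1)] by blast
  next
    case True
    have "\<not> hrel G T1 z y"
    proof
      assume "hrel G T1 z y"
      moreover have "hrel G T1 x z" using hrel_sym[OF assms(1,2) z xy(1) True] .
      ultimately show False using hrel_trans[OF assms(1,2)] xy by blast
    qed
    then have "hrel G T2 z y" using pair_cover[OF assms(1-4) z xy(2)] by blast
    moreover have "hrel G T2 y x" using hrel_sym[OF assms(1,3) xy(1,2) x2] .
    ultimately show ?thesis using hrel_trans[OF assms(1,3)] by blast
  qed
  have "\<forall>k\<in>K. \<forall>l\<in>K. hrel G T2 k l"
    using zx hrel_sym[OF assms(1,3) _ xy(1)] hrel_trans[OF assms(1,3)] by blast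
  from full[OF assms(1,3) this assms(5-7)] show ?thesis .
qed

definition Tsub :: "'k set \<Rightarrow> ('g,'b) monoid_scheme \<Rightarrow> 'k \<Rightarrow> ('k\<times>'g\<times>'k) option set" where
  "Tsub K G a = insert None (Some ` ((K - {a}) \<times> carrier G \<times> (K - {a})))"

lemma Tsub_inv:
  assumes "group G"
  shows "inverse_subsemigroup (rees0_carrier K G) (rees0_mult G (diag_matrix G)) (Tsub K G a)"
proof -
  interpret G: group G by fact
  have 1: "Tsub K G a \<subseteq> rees0_carrier K G" by (auto simp: Tsub_def rees0_carrier_def)
  have 2: "rees0_mult G (diag_matrix G) x y \<in> Tsub K G a" if "x \<in> Tsub K G a" "y \<in> Tsub K G a" for x y
    using that by (auto simp: Tsub_def split: if_splits)
  have 3: "y \<in> Tsub K G a" if "x \<in> Tsub K G a" "y \<in> sg_inverses (rees0_carrier K G) (rees0_mult G (diag_matrix G)) x" for x y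
  proof -
    from that(2) have y: "y \<in> rees0_carrier K G"
      and e1: "rees0_mult G (diag_matrix G) (rees0_mult G (diag_matrix G) x y) x = x"
      and e2: "rees0_mult G (diag_matrix G) (rees0_mult G (diag_matrix G) y x) y = y"
      by (auto simp: sg_inverses_def)
    show ?thesis
    proof (cases x)
      case None then show ?thesis using e2 by (simp add: Tsub_def)
    next
      case (Some x')
      then obtain k g l where x: "x = Some (k,g,l)" by (cases x') auto
      with that(1) have k: "k \<in> K - {a}" "l \<in> K - {a}" by (auto simp: Tsub_def)
      show ?thesis
      proof (cases y)
        case None then show ?thesis using e1 x by simp
      next
        case (Some y')
        then obtain k' h l' where yy: "y = Some (k',h,l')" by (cases y') auto
        have "k' = l" "l' = k" using e1 x yy by (auto split: if_splits)
        then show ?thesis using yy y k by (auto simp: Tsub_def)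
      qed
    qed
  qed
  show ?thesis unfolding inverse_subsemigroup_def using 1 2 3 by blast
qed

lemma Tsub_sub: "Tsub K G a \<subseteq> rees0_carrier K G"
  by (auto simp: Tsub_def rees0_carrier_def)

lemma Tsub_proper:
  assumes "group G" "a \<in> K"
  shows "Tsub K G a \<noteq> rees0_carrier K G"
proof -
  interpret G: group G by fact
  have "Some (a, \<one>\<^bsub>G\<^esub>, a) \<in> rees0_carrier K G" "Some (a, \<one>\<^bsub>G\<^esub>, a) \<notin> Tsub K G a"
    using assms by (auto simp: Tsub_def)
  then show ?thesis by blast
qed

theorem mainTheorem15:
  fixes G :: "('g, 'b) monoid_scheme" and K :: "'k set"
  assumes "group G" and "finite (carrier G)"
    and "finite K" and "card K \<ge> 3"
  shows "sigma_i (rees0_carrier K G) (rees0_mult G (diag_matrix G)) = 3"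
proof -
  let ?S = "rees0_carrier K G" and ?m = "rees0_mult G (diag_matrix G)"
  obtain a b c where abc: "a \<in> K" "b \<in> K" "c \<in> K" "a \<noteq> b" "a \<noteq> c" "b \<noteq> c"
  proof -
    obtain B where B: "B \<subseteq> K" "card B = 3" using obtain_subset_with_card_n[OF assms(4)] by blast
    then have "\<exists>a b c. a \<in> K \<and> b \<in> K \<and> c \<in> K \<and> a \<noteq> b \<and> a \<noteq> c \<and> b \<noteq> c"
      unfolding card_3_iff by blast
    then show ?thesis using that by blast
  qed
  have c3: "covers_by_proper_inv ?S ?m 3"
    unfolding covers_by_proper_inv_def
  proof (intro exI conjI allI impI)
    let ?T = "\<lambda>i::nat. if i = 0 then Tsub K G a else if i = 1 then Tsub K G b else Tsub K G c"
    fix i :: nat assume "i < 3"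
    show "inverse_subsemigroup ?S ?m (?T i)" by (simp add: Tsub_inv[OF assms(1)])
    show "?T i \<noteq> ?S" using Tsub_proper[OF assms(1) abc(1)] Tsub_proper[OF assms(1) abc(2)] Tsub_proper[OF assms(1) abc(3)] by auto
  next
    let ?T = "\<lambda>i::nat. if i = 0 then Tsub K G a else if i = 1 then Tsub K G b else Tsub K G c"
    have sub: "?T i \<subseteq> ?S" for i by (simp add: Tsub_sub)
    have "?S \<subseteq> (\<Union>i<3. ?T i)"
    proof
      fix x assume x: "x \<in> ?S"
      have "x \<in> ?T 0 \<or> x \<in> ?T 1 \<or> x \<in> ?T 2"
        using x abc by (auto simp: rees0_carrier_def Tsub_def)
      then show "x \<in> (\<Union>i<3. ?T i)"
      proof (elim disjE)
        assume "x \<in> ?T 0" then show ?thesis by (intro UN_I[of 0]) auto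
      next
        assume "x \<in> ?T 1" then show ?thesis by (intro UN_I[of 1]) auto
      next
        assume "x \<in> ?T 2" then show ?thesis by (intro UN_I[of 2]) auto
      qed
    qed
    with sub show "(\<Union>i<3. ?T i) = ?S" by blast
  qed
  have n1: "\<not> covers_by_proper_inv ?S ?m 1"
  proof
    assume "covers_by_proper_inv ?S ?m 1"
    then obtain T :: "nat \<Rightarrow> ('k \<times> 'g \<times> 'k) option set"
      where T: "\<forall>i<1. inverse_subsemigroup ?S ?m (T i) \<and> T i \<noteq> ?S"
      "(\<Union>i<1. T i) = ?S" unfolding covers_by_proper_inv_def by blast
    have l1: "{..<1::nat} = {0}" by auto
    have "T 0 = ?S" using T(2) unfolding l1 by simp
    moreover have "T 0 \<noteq> ?S" using T(1)[rule_format, of 0] by simp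
    ultimately show False by simp
  qed
  have n2: "\<not> covers_by_proper_inv ?S ?m 2"
  proof
    assume "covers_by_proper_inv ?S ?m 2"
    then obtain T :: "nat \<Rightarrow> ('k \<times> 'g \<times> 'k) option set" where T: "\<forall>i<2. inverse_subsemigroup ?S ?m (T i) \<and> T i \<noteq> ?S"
      "(\<Union>i<2. T i) = ?S" unfolding covers_by_proper_inv_def by blast
    have l2: "{..<2::nat} = {0,1}" by auto
    have u: "T 0 \<union> T 1 = ?S" using T(2) unfolding l2 by simp
    have t0: "inverse_subsemigroup ?S ?m (T 0)" "T 0 \<noteq> ?S" using T(1)[rule_format, of 0] by simp_all
    have t1: "inverse_subsemigroup ?S ?m (T 1)" "T 1 \<noteq> ?S" using T(1)[rule_format, of 1] by simp_all
    show False using no_two[OF assms(1) t0(1) t1(1) u abc(1,2,4) t0(2)] t1(2) by simp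
  qed
  have "(LEAST n. n > 0 \<and> covers_by_proper_inv ?S ?m n) = 3"
  proof (rule Least_equality)
    show "3 > (0::nat) \<and> covers_by_proper_inv ?S ?m 3" using c3 by simp
  next
    fix n :: nat assume "n > 0 \<and> covers_by_proper_inv ?S ?m n"
    then show "3 \<le> n" using n1 n2
    proof -
      assume nn: "n > 0 \<and> covers_by_proper_inv ?S ?m n"
      show "3 \<le> n"
      proof (rule ccontr)
        assume "\<not> 3 \<le> n"
        with nn have "n = 1 \<or> n = 2" by linarith
        with nn n1 n2 show False by auto
      qed
    qed
  qed
  moreover have "\<exists>n>0. covers_by_proper_inv ?S ?m n" using c3 by (intro exI[of _ 3]) simp
  ultimately show ?thesis unfolding sigma_i_def by (simp add: numeral_eq_enat)
qed

end
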